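(* Let $R$ be a commutative ring with nonzero identity, $\delta$ an expansion of ideals of $R$, and $I$ a $\delta$-$n$-ideal of $R$ such that $(\delta(I):x)\subseteq\delta((I:x))\neq R$ for all $x\in R\setminus\delta(I)$. Then $(I:x)$ is a $\delta$-$n$-ideal of $R$ for every $x\in R\setminus\delta(I)$. In particular, if $I$ is a quasi $n$-ideal of $R$, then $(I:x)$ is a quasi $n$-ideal of $R$ for all $x\in R\setminus\sqrt{I}$.
   Context: An expansion of ideals of a ring $R$ is a map $\delta$ from the set of ideals of $R$ to itself such that $I\subseteq\delta(I)$ for every ideal $I$, and $\delta(I)\subseteq\delta(J)$ whenever $I\subseteq J$. $\sqrt{0}$ denotes the nilradical of $R$ and $(I:x)=\{r\in R: rx\in I\}$. Given an expansion $\delta$, a proper ideal $I$ of $R$ is a $\delta$-$n$-ideal if whenever $a,b\in R$ with $ab\in I$ and $a\notin\sqrt{0}$, then $b\in\delta(I)$. A quasi $n$-ideal is a $\delta_1$-$n$-ideal, where $\delta_1(J)=\sqrt{J}$. *)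

theory Defs
  imports Main
begin

definition is_ideal :: "'a::comm_ring_1 set \<Rightarrow> bool" where
  "is_ideal I \<longleftrightarrow> 0 \<in> I \<and> (\<forall>a\<in>I. \<forall>b\<in>I. a + b \<in> I) \<and> (\<forall>a\<in>I. - a \<in> I)
     \<and> (\<forall>r a. a \<in> I \<longrightarrow> r * a \<in> I)"

definition proper_ideal :: "'a::comm_ring_1 set \<Rightarrow> bool" where
  "proper_ideal I \<longleftrightarrow> is_ideal I \<and> I \<noteq> UNIV"

definition rad :: "'a::comm_ring_1 set \<Rightarrow> 'a set" where
  "rad I = {a. \<exists>n::nat. a ^ n \<in> I}"

definition nilrad :: "'a::comm_ring_1 set" where
  "nilrad = rad {0}"

definition colon :: "'a::comm_ring_1 set \<Rightarrow> 'a \<Rightarrow> 'a set" where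
  "colon I x = {r. r * x \<in> I}"

definition expansion :: "('a::comm_ring_1 set \<Rightarrow> 'a set) \<Rightarrow> bool" where
  "expansion \<delta> \<longleftrightarrow>
     (\<forall>I. is_ideal I \<longrightarrow> is_ideal (\<delta> I) \<and> I \<subseteq> \<delta> I) \<and>
     (\<forall>I J. is_ideal I \<longrightarrow> is_ideal J \<longrightarrow> I \<subseteq> J \<longrightarrow> \<delta> I \<subseteq> \<delta> J)"

definition delta_n_ideal :: "('a::comm_ring_1 set \<Rightarrow> 'a set) \<Rightarrow> 'a set \<Rightarrow> bool" where
  "delta_n_ideal \<delta> I \<longleftrightarrow> proper_ideal I \<and>
     (\<forall>a b. a * b \<in> I \<longrightarrow> a \<notin> nilrad \<longrightarrow> b \<in> \<delta> I)"

definition quasi_n_ideal :: "'a::comm_ring_1 set \<Rightarrow> bool" where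
  "quasi_n_ideal I \<longleftrightarrow> delta_n_ideal rad I"

end

theory Submission
  imports Defs
begin

lemma colon_ideal: "is_ideal I \<Longrightarrow> is_ideal (colon I x)"
  unfolding is_ideal_def colon_def
  by (auto simp: distrib_right mult.assoc)

lemma part1:
  fixes \<delta> :: "'a::comm_ring_1 set \<Rightarrow> 'a set"
  assumes e: "expansion \<delta>" and d: "delta_n_ideal \<delta> I"
    and h: "\<forall>x. x \<notin> \<delta> I \<longrightarrow> colon (\<delta> I) x \<subseteq> \<delta> (colon I x) \<and> \<delta> (colon I x) \<noteq> UNIV"
    and x: "x \<notin> \<delta> I"
  shows "delta_n_ideal \<delta> (colon I x)"
proof -
  have iI: "is_ideal I" using d by (simp add: delta_n_ideal_def proper_ideal_def)
  have ic: "is_ideal (colon I x)" using colon_ideal[OF iI] .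
  have sub: "colon I x \<subseteq> \<delta> (colon I x)" using e ic by (simp add: expansion_def)
  have pr: "colon I x \<noteq> UNIV" using sub h x by blast
  show ?thesis unfolding delta_n_ideal_def proper_ideal_def
  proof (intro conjI ic pr allI impI)
    fix a b assume ab: "a * b \<in> colon I x" and a: "a \<notin> nilrad"
    have "a * (b * x) \<in> I" using ab by (simp add: colon_def mult.assoc)
    hence "b * x \<in> \<delta> I" using d a by (simp add: delta_n_ideal_def)
    hence "b \<in> colon (\<delta> I) x" by (simp add: colon_def)
    thus "b \<in> \<delta> (colon I x)" using h x by blast
  qed
qed

lemma part2:
  fixes J :: "'a::comm_ring_1 set"
  assumes q: "quasi_n_ideal J" and x: "x \<notin> rad J"
  shows "quasi_n_ideal (colon J x)"
proof -
  have d: "delta_n_ideal rad J" using q by (simp add: quasi_n_ideal_def)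
  have iJ: "is_ideal J" using d by (simp add: delta_n_ideal_def proper_ideal_def)
  have ic: "is_ideal (colon J x)" using colon_ideal[OF iJ] .
  have "x \<notin> J" using x unfolding rad_def by (metis (mono_tags) mem_Collect_eq power_one_right)
  hence pr: "colon J x \<noteq> UNIV" by (auto simp: colon_def) (metis mem_Collect_eq mult_1 UNIV_I)
  have J0: "0 \<in> J" using iJ by (simp add: is_ideal_def)
  show ?thesis unfolding quasi_n_ideal_def delta_n_ideal_def proper_ideal_def
  proof (intro conjI ic pr allI impI)
    fix a b assume ab: "a * b \<in> colon J x" and a: "a \<notin> nilrad"
    have "a * (b * x) \<in> J" using ab by (simp add: colon_def mult.assoc)
    hence "b * x \<in> rad J" using d a by (simp add: delta_n_ideal_def)
    then obtain n where n: "(b * x) ^ n \<in> J" by (auto simp: rad_def)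
    have xn: "x ^ n \<notin> nilrad"
    proof
      assume "x ^ n \<in> nilrad"
      then obtain m where "(x ^ n) ^ m = 0" by (auto simp: nilrad_def rad_def)
      hence "x ^ (n * m) \<in> J" using J0 by (simp add: power_mult)
      thus False using x by (auto simp: rad_def)
    qed
    have "x ^ n * b ^ n \<in> J" using n by (simp add: power_mult_distrib mult.commute)
    hence "b ^ n \<in> rad J" using d xn by (simp add: delta_n_ideal_def)
    then obtain k where k: "(b ^ n) ^ k \<in> J" by (auto simp: rad_def)
    have "(b ^ n) ^ k * x \<in> J" using iJ k unfolding is_ideal_def by (metis mult.commute)
    thus "b \<in> rad (colon J x)" unfolding rad_def colon_def by (metis mem_Collect_eq power_mult)
  qed
qed

theorem lemma2p11:
  fixes \<delta> :: "'a::comm_ring_1 set \<Rightarrow> 'a set" and I J :: "'a set"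
  shows "((expansion \<delta> \<and> delta_n_ideal \<delta> I \<and>
           (\<forall>x. x \<notin> \<delta> I \<longrightarrow> colon (\<delta> I) x \<subseteq> \<delta> (colon I x) \<and> \<delta> (colon I x) \<noteq> UNIV))
         \<longrightarrow> (\<forall>x. x \<notin> \<delta> I \<longrightarrow> delta_n_ideal \<delta> (colon I x)))
       \<and> (quasi_n_ideal J \<longrightarrow> (\<forall>x. x \<notin> rad J \<longrightarrow> quasi_n_ideal (colon J x)))"
  using part1 part2 by blast

end
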